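(* For the RHA process and all $n\ge0$, $j\ge1$, $$H(X^n_j)\le\min_{0\le l\le n}\Big(H(\mathcal G_{\le l})+2^{n-l}\log k_l\Big),$$ where $H(\mathcal G_{\le0})=0$.
   Context: Random hierarchical association (RHA) process. Fix positive integers $(k_n)_{n\ge0}$ (perplexities) with $k_{n-1}\le k_n\le k_{n-1}^2$ for all $n\ge1$. On a probability space $(\Omega,\mathcal J,P)$ let, for each $n\ge1$, $(L_{nj},R_{nj})_{j=1}^{k_n}$ be the lexicographically sorted enumeration of a uniformly random $k_n$-element subset of $\{1,\dots,k_{n-1}\}^2$ (each of the $\binom{k_{n-1}^2}{k_n}$ subsets equally likely), independently over $n$. Let $(C_n)_{n\ge0}$ be independent, independent of all $(L_{nj},R_{nj})$, with $C_n$ uniform on $\{1,\dots,k_n\}$. Define strings $Y^0_j=j$ (length 1) for $1\le j\le k_0$ and $Y^n_j=Y^{n-1}_{L_{nj}}Y^{n-1}_{R_{nj}}$ (concatenation). The RHA process is $\mathcal X=Y^0_{C_0}Y^1_{C_1}Y^2_{C_2}\cdots=X_1X_2X_3\cdots$, $X_{k:l}=X_k\cdots X_l$; for $n\ge0$, $j\ge1$, $X^n_j=X_{j2^n:(j+1)2^n-1}$. $\mathcal G_{\le n}=(L_{lj},R_{lj})_{1\le l\le n,\,1\le j\le k_l}$ ($\mathcal G_{\le0}$ trivial). $H(X)=\mathbb E_P[-\log P(X)]$ with natural logarithm. *)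

theory Defs
  imports "HOL-Probability.Probability"
begin

text \<open>Random hierarchical association process. The random k_n-subset of
  {1..k_(n-1)}^2 at level n is S n; its lexicographically sorted enumeration
  gives (L_nj, R_nj), 1-indexed.\<close>

definition lex_less :: "nat \<times> nat \<Rightarrow> nat \<times> nat \<Rightarrow> bool" where
  "lex_less p q \<longleftrightarrow> fst p < fst q \<or> (fst p = fst q \<and> snd p < snd q)"

definition lex_sorted_list :: "(nat \<times> nat) set \<Rightarrow> (nat \<times> nat) list" where
  "lex_sorted_list A = (THE xs. set xs = A \<and> sorted_wrt lex_less xs)"

definition rha_L :: "(nat \<Rightarrow> (nat \<times> nat) set) \<Rightarrow> nat \<Rightarrow> nat \<Rightarrow> nat" where
  "rha_L S n j = fst (lex_sorted_list (S n) ! (j - 1))"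

definition rha_R :: "(nat \<Rightarrow> (nat \<times> nat) set) \<Rightarrow> nat \<Rightarrow> nat \<Rightarrow> nat" where
  "rha_R S n j = snd (lex_sorted_list (S n) ! (j - 1))"

fun rha_Y :: "(nat \<Rightarrow> (nat \<times> nat) set) \<Rightarrow> nat \<Rightarrow> nat \<Rightarrow> nat list" where
  "rha_Y S 0 j = [j]"
| "rha_Y S (Suc n) j = rha_Y S n (rha_L S (Suc n) j) @ rha_Y S n (rha_R S (Suc n) j)"

text \<open>X_i (1-indexed, i >= 1): the i-th symbol of Y^0_{C_0} Y^1_{C_1} ...;
  the first i blocks already have length 2^i - 1 >= i.\<close>
definition rha_X :: "(nat \<Rightarrow> (nat \<times> nat) set) \<Rightarrow> (nat \<Rightarrow> nat) \<Rightarrow> nat \<Rightarrow> nat" where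
  "rha_X S C i = concat (map (\<lambda>m. rha_Y S m (C m)) [0..<i]) ! (i - 1)"

definition rha_block :: "(nat \<Rightarrow> (nat \<times> nat) set) \<Rightarrow> (nat \<Rightarrow> nat) \<Rightarrow> nat \<Rightarrow> nat \<Rightarrow> nat list" where
  "rha_block S C n j = map (rha_X S C) [j * 2 ^ n ..< (j + 1) * 2 ^ n]"

text \<open>G_{<=n} = (L_lj, R_lj)_{1<=l<=n, 1<=j<=k_l}, i.e. the sorted enumerations of S 1, ..., S n
  (empty list, i.e. trivial, for n = 0).\<close>
definition rha_G :: "(nat \<Rightarrow> (nat \<times> nat) set) \<Rightarrow> nat \<Rightarrow> (nat \<times> nat) list list" where
  "rha_G S n = map (\<lambda>l. lex_sorted_list (S l)) [1..<n + 1]"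

definition entropy_H :: "'a measure \<Rightarrow> ('a \<Rightarrow> 'b) \<Rightarrow> real" where
  "entropy_H M X = (\<integral>\<omega>. - ln (measure M {\<omega>' \<in> space M. X \<omega>' = X \<omega>}) \<partial>M)"

end

theory Submission
  imports Defs
begin


lemma lex_linorder: "class.linorder (\<lambda>p q. lex_less p q \<or> p = q) lex_less"
  by unfold_locales (auto simp: lex_less_def)

lemma lex_sorted_list_props:
  assumes "finite A"
  shows "set (lex_sorted_list A) = A \<and> length (lex_sorted_list A) = card A"
proof -
  have ex: "\<exists>!xs. sorted_wrt lex_less xs \<and> set xs = A"
    using linorder.ex1_sorted_list_for_set_if_finite[OF lex_linorder assms] .
  have ex': "\<exists>!xs. set xs = A \<and> sorted_wrt lex_less xs" using ex by metis
  have *: "set (lex_sorted_list A) = A \<and> sorted_wrt lex_less (lex_sorted_list A)"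
    unfolding lex_sorted_list_def by (rule theI'[OF ex'])
  have irr: "\<And>x. \<not> lex_less x x" by (auto simp: lex_less_def)
  have dg: "\<And>xs. sorted_wrt lex_less xs \<Longrightarrow> distinct xs"
  proof -
    fix xs :: "(nat \<times> nat) list" show "sorted_wrt lex_less xs \<Longrightarrow> distinct xs"
      by (induction xs) (use irr in auto)
  qed
  have "distinct (lex_sorted_list A)"
    using * dg by blast
  then show ?thesis using * by (metis distinct_card)
qed


fun Yg :: "(nat \<times> nat) list list \<Rightarrow> nat \<Rightarrow> nat \<Rightarrow> nat list" where
  "Yg gs 0 j = [j]"
| "Yg gs (Suc n) j = Yg gs n (fst (gs ! n ! (j - 1))) @ Yg gs n (snd (gs ! n ! (j - 1)))"

fun Dg :: "(nat \<times> nat) list list \<Rightarrow> nat \<Rightarrow> nat \<Rightarrow> nat \<Rightarrow> nat list" where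
  "Dg gs l 0 j = [j]"
| "Dg gs l (Suc n) j = (if Suc n \<le> l then [j] else
     Dg gs l n (fst (gs ! n ! (j - 1))) @ Dg gs l n (snd (gs ! n ! (j - 1))))"

lemma length_Yg[simp]: "length (Yg gs n j) = 2 ^ n"
  by (induction n arbitrary: j) auto

lemma Yg_Dg: "l \<le> n \<Longrightarrow> Yg gs n j = concat (map (Yg gs l) (Dg gs l n j))"
proof (induction n arbitrary: j)
  case 0 then show ?case by simp
next
  case (Suc n)
  show ?case
  proof (cases "l = Suc n")
    case True then show ?thesis by simp
  next
    case False
    then have "l \<le> n" using Suc by simp
    then show ?thesis using Suc.IH False by simp
  qed
qed

lemma length_Dg: "l \<le> n \<Longrightarrow> length (Dg gs l n j) = 2 ^ (n - l)"
proof (induction n arbitrary: j)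
  case 0 then show ?case by simp
next
  case (Suc n)
  show ?case
  proof (cases "l = Suc n")
    case True then show ?thesis by simp
  next
    case False
    then have "l \<le> n" using Suc by simp
    then show ?thesis using Suc.IH False by (simp add: Suc_diff_le)
  qed
qed

definition validg :: "(nat \<Rightarrow> nat) \<Rightarrow> (nat \<times> nat) list list \<Rightarrow> nat \<Rightarrow> bool" where
  "validg k gs m \<longleftrightarrow> length gs = m \<and>
     (\<forall>i<m. length (gs ! i) = k (Suc i) \<and> set (gs ! i) \<subseteq> {1..k i} \<times> {1..k i})"

lemma set_Dg:
  assumes "\<forall>i<n. length (gs ! i) = k (Suc i) \<and> set (gs ! i) \<subseteq> {1..k i} \<times> {1..k i}"
    and "j \<in> {1..k n}" and "l \<le> n"
  shows "set (Dg gs l n j) \<subseteq> {1..k l}"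
  using assms
proof (induction n arbitrary: j)
  case 0 then show ?case by simp
next
  case (Suc n)
  show ?case
  proof (cases "l = Suc n")
    case True then show ?thesis using Suc.prems by simp
  next
    case False
    then have ln: "l \<le> n" using Suc by simp
    have v: "\<forall>i<n. length (gs ! i) = k (Suc i) \<and> set (gs ! i) \<subseteq> {1..k i} \<times> {1..k i}"
      using Suc.prems(1) by auto
    have "j - 1 < length (gs ! n)" using Suc.prems by auto
    then have "gs ! n ! (j - 1) \<in> set (gs ! n)" by simp
    then have m: "gs ! n ! (j - 1) \<in> {1..k n} \<times> {1..k n}" using Suc.prems(1) by auto
    show ?thesis using Suc.IH[OF v _ ln, of "fst (gs ! n ! (j - 1))"]
        Suc.IH[OF v _ ln, of "snd (gs ! n ! (j - 1))"] m False ln by (auto simp: mem_Times_iff)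
  qed
qed

lemma Yg_take: "n \<le> l' \<Longrightarrow> Yg (take l' gs) n j = Yg gs n j"
  by (induction n arbitrary: j) auto

lemma rha_G_nth: "i < N \<Longrightarrow> rha_G S N ! i = lex_sorted_list (S (Suc i))"
  by (simp add: rha_G_def del: upt_Suc)

lemma rha_Y_Yg: "n \<le> N \<Longrightarrow> rha_Y S n j = Yg (rha_G S N) n j"
  by (induction n arbitrary: j) (auto simp: rha_G_nth rha_L_def rha_R_def)

lemma length_rha_Y[simp]: "length (rha_Y S n j) = 2 ^ n"
  by (induction n arbitrary: j) auto

lemma length_prefix: "length (concat (map (\<lambda>i. rha_Y S i (C i)) [0..<m])) = 2 ^ m - 1"
proof (induction m)
  case 0 then show ?case by simp
next
  case (Suc m)
  have "(1::nat) \<le> 2 ^ m" by simp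
  then show ?case using Suc by simp
qed

lemma rha_X_pos:
  assumes "2 ^ m \<le> p" "p < 2 ^ Suc m"
  shows "rha_X S C p = rha_Y S m (C m) ! (p - 2 ^ m)"
proof -
  have "m < 2 ^ m" by (rule less_exp)
  then have mp: "m < p" using assms by linarith
  have u1: "[0..<p] = [0..<m] @ [m..<p]" using upt_add_eq_append[of 0 m "p-m"] mp by simp
  have u2: "[m..<p] = m # [Suc m..<p]" using mp upt_conv_Cons by simp
  have up: "[0..<p] = [0..<m] @ [m] @ [Suc m..<p]" using u1 u2 by simp
  have "rha_X S C p = (concat (map (\<lambda>i. rha_Y S i (C i)) [0..<m]) @ rha_Y S m (C m)
      @ concat (map (\<lambda>i. rha_Y S i (C i)) [Suc m..<p])) ! (p - 1)"
    unfolding rha_X_def up by simp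
  also have "\<dots> = rha_Y S m (C m) ! (p - 2 ^ m)"
  proof -
    have "(1::nat) \<le> 2 ^ m" by simp
    then have "\<not> p - 1 < 2 ^ m - 1" "p - 1 - (2 ^ m - 1) = p - 2 ^ m" "p - 2 ^ m < 2 ^ m"
      using assms by auto
    then show ?thesis by (simp add: nth_append length_prefix)
  qed
  finally show ?thesis .
qed

lemma map_nth_upt:
  assumes "a + b \<le> length xs"
  shows "map (\<lambda>p. xs ! (p - c)) [c + a..<c + a + b] = take b (drop a xs)"
  by (rule nth_equalityI) (use assms in auto)

lemma drop_concat_const:
  assumes "\<forall>x\<in>set xs. length (f x) = L"
  shows "drop (b * L) (concat (map f xs)) = concat (map f (drop b xs))"
  using assms
proof (induction xs arbitrary: b)
  case Nil then show ?case by simp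
next
  case (Cons x xs)
  show ?case
  proof (cases b)
    case 0 then show ?thesis by simp
  next
    case (Suc b')
    then have "drop (b * L) (concat (map f (x # xs))) = drop (b' * L) (concat (map f xs))"
      using Cons.prems by simp
    then show ?thesis using Cons Suc by simp
  qed
qed

lemma take_concat_const:
  assumes "\<forall>x\<in>set xs. length (f x) = L"
  shows "take (a * L) (concat (map f xs)) = concat (map f (take a xs))"
  using assms
proof (induction xs arbitrary: a)
  case Nil then show ?case by simp
next
  case (Cons x xs)
  show ?case
  proof (cases a)
    case 0 then show ?thesis by simp
  next
    case (Suc a')
    then show ?thesis using Cons by simp
  qed
qed

lemma block_repr:
  assumes "2 ^ e \<le> j" "j < 2 ^ Suc e" "l \<le> n"
  shows "rha_block S C n j =
    concat (map (Yg (take l (rha_G S (n + e))) l)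
      (take (2 ^ (n - l)) (drop ((j - 2 ^ e) * 2 ^ (n - l)) (Dg (rha_G S (n + e)) l (n + e) (C (n + e))))))"
proof -
  define m where "m = n + e"
  define t where "t = j - 2 ^ e"
  define gs where "gs = rha_G S m"
  define Y where "Y = rha_Y S m (C m)"
  have jt: "j = 2 ^ e + t" using assms t_def by simp
  have t1: "t + 1 \<le> 2 ^ e" using assms jt by simp
  have pos: "j * 2 ^ n = 2 ^ m + t * 2 ^ n" by (simp add: jt m_def algebra_simps power_add)
  have pos2: "(j + 1) * 2 ^ n = 2 ^ m + t * 2 ^ n + 2 ^ n" by (simp add: jt m_def algebra_simps power_add)
  have hi: "2 ^ m + t * 2 ^ n + 2 ^ n \<le> 2 ^ Suc m"
  proof -
    have "(t + 1) * 2 ^ n \<le> 2 ^ e * 2 ^ n" using t1 mult_le_mono1 by blast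
    then show ?thesis by (simp add: m_def power_add algebra_simps)
  qed
  have "rha_block S C n j = map (\<lambda>p. Y ! (p - 2 ^ m)) [2 ^ m + t * 2 ^ n..<2 ^ m + t * 2 ^ n + 2 ^ n]"
    unfolding rha_block_def pos pos2 Y_def
    by (rule map_cong[OF refl], rule rha_X_pos) (use hi in auto)
  also have "\<dots> = take (2 ^ n) (drop (t * 2 ^ n) Y)"
    by (rule map_nth_upt) (use hi in \<open>simp add: Y_def\<close>)
  also have "Y = concat (map (Yg gs l) (Dg gs l m (C m)))"
  proof -
    have "Y = Yg gs m (C m)" unfolding Y_def gs_def by (simp add: rha_Y_Yg)
    also have "\<dots> = concat (map (Yg gs l) (Dg gs l m (C m)))"
      by (rule Yg_Dg) (use assms in \<open>simp add: m_def\<close>)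
    finally show ?thesis .
  qed
  also have "t * 2 ^ n = (t * 2 ^ (n - l)) * 2 ^ l" using assms by (simp add: power_add[symmetric])
  also have "2 ^ n = (2::nat) ^ (n - l) * 2 ^ l" using assms by (simp add: power_add[symmetric])
  finally have "rha_block S C n j = take (2 ^ (n - l) * 2 ^ l) (concat (map (Yg gs l) (drop (t * 2 ^ (n - l)) (Dg gs l m (C m)))))"
    by (simp add: drop_concat_const)
  also have "\<dots> = concat (map (Yg gs l) (take (2 ^ (n - l)) (drop (t * 2 ^ (n - l)) (Dg gs l m (C m)))))"
    by (simp add: take_concat_const)
  also have "\<dots> = concat (map (Yg (take l gs) l) (take (2 ^ (n - l)) (drop (t * 2 ^ (n - l)) (Dg gs l m (C m)))))"
  proof -
    have "Yg (take l gs) l = Yg gs l" by (rule ext) (simp add: Yg_take)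
    then show ?thesis by simp
  qed
  finally show ?thesis unfolding m_def t_def gs_def .
qed



lemma fiber_sets:
  assumes "V \<in> M \<rightarrow>\<^sub>M count_space UNIV"
  shows "{\<omega>\<in>space M. P (V \<omega>)} \<in> sets M"
proof -
  have "V -` {x. P x} \<inter> space M \<in> sets M" by (rule measurable_sets[OF assms]) simp
  moreover have "V -` {x. P x} \<inter> space M = {\<omega>\<in>space M. P (V \<omega>)}" by auto
  ultimately show ?thesis by simp
qed

lemma fin_int:
  assumes ps: "prob_space M" and V: "V \<in> M \<rightarrow>\<^sub>M count_space UNIV"
    and ae: "AE \<omega> in M. V \<omega> \<in> D" and fin: "finite D"
  shows "integrable M (\<lambda>\<omega>. \<phi> (V \<omega>) :: real)"
    "(\<integral>\<omega>. \<phi> (V \<omega>) \<partial>M) = (\<Sum>v\<in>D. \<phi> v * measure M {\<omega>\<in>space M. V \<omega> = v})"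
proof -
  interpret prob_space M by (rule ps)
  have sets: "\<And>v. {\<omega>\<in>space M. V \<omega> = v} \<in> sets M" using fiber_sets[OF V, of "\<lambda>x. x = v" for v] by simp
  define g where "g \<omega> = (\<Sum>v\<in>D. \<phi> v * indicator {\<omega>\<in>space M. V \<omega> = v} \<omega>)" for \<omega>
  have eq: "AE \<omega> in M. \<phi> (V \<omega>) = g \<omega>"
    using AE_space ae
  proof eventually_elim
    case (elim \<omega>)
    have "g \<omega> = (\<Sum>v\<in>D. if V \<omega> = v then \<phi> v else 0)"
      unfolding g_def by (rule sum.cong) (use elim in auto)
    also have "\<dots> = \<phi> (V \<omega>)" using elim fin by (simp add: sum.delta)
    finally show ?case by simp
  qed
  have b1: "(\<lambda>\<omega>. \<phi> (V \<omega>)) \<in> borel_measurable M"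
    by (rule measurable_compose[OF V]) simp
  have gi: "integrable M g"
    unfolding g_def
  proof (rule Bochner_Integration.integrable_sum)
    fix v assume "v \<in> D"
    have "integrable M (indicator {\<omega>\<in>space M. V \<omega> = v} :: 'a \<Rightarrow> real)"
      using sets[of v] by (simp add: less_top[symmetric])
    then show "integrable M (\<lambda>\<omega>. \<phi> v * indicator {\<omega>\<in>space M. V \<omega> = v} \<omega>)"
      by simp
  qed
  have b2: "g \<in> borel_measurable M" using gi by blast
  show "integrable M (\<lambda>\<omega>. \<phi> (V \<omega>))"
    using integrable_cong_AE[OF b1 b2 eq] gi by simp
  have "(\<integral>\<omega>. \<phi> (V \<omega>) \<partial>M) = integral\<^sup>L M g" by (rule integral_cong_AE[OF b1 b2 eq])
  also have "\<dots> = (\<Sum>v\<in>D. \<phi> v * measure M {\<omega>\<in>space M. V \<omega> = v})"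
    unfolding g_def
    by (subst Bochner_Integration.integral_sum) (auto intro!: integrable_mult_right integrable_real_indicator sets
        simp: Int_absorb2 sets.sets_into_space less_top[symmetric])
  finally show "(\<integral>\<omega>. \<phi> (V \<omega>) \<partial>M) = (\<Sum>v\<in>D. \<phi> v * measure M {\<omega>\<in>space M. V \<omega> = v})" .
qed



lemma key_ineq:
  fixes r q N :: real
  assumes "0 \<le> r" "r \<le> q" "0 < N"
  shows "- ln r * r \<le> - ln q * r + q / N - r + r * ln N"
proof (cases "r = 0")
  case True then show ?thesis using assms by simp
next
  case False
  then have r: "0 < r" using assms by simp
  then have q: "0 < q" using assms by simp
  have "ln (q / (N * r)) \<le> q / (N * r) - 1" by (rule ln_le_minus_one) (use r q assms in simp)
  moreover have "ln (q / (N * r)) = ln q - ln N - ln r" using r q assms by (simp add: ln_div ln_mult)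
  ultimately have "ln q - ln N - ln r \<le> q / (N * r) - 1" by simp
  then have "r * (ln q - ln N - ln r) \<le> r * (q / (N * r) - 1)" using r by (simp add: mult_left_mono)
  also have "r * (q / (N * r) - 1) = q / N - r" using r assms by (simp add: field_simps)
  finally show ?thesis by (simp add: algebra_simps)
qed

lemma entropy_bound:
  fixes W :: "'a \<Rightarrow> 'g \<times> 'z"
  assumes ps: "prob_space M" and W: "W \<in> M \<rightarrow>\<^sub>M count_space UNIV"
    and ae: "AE \<omega> in M. W \<omega> \<in> DG \<times> T"
    and fG: "finite DG" and fT: "finite T" and nT: "T \<noteq> {}"
  shows "entropy_H M (\<lambda>\<omega>. F (W \<omega>)) \<le> entropy_H M (\<lambda>\<omega>. fst (W \<omega>)) + ln (card T)"
proof -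
  interpret prob_space M by (rule ps)
  define D where "D = DG \<times> T"
  have fD: "finite D" using fG fT by (simp add: D_def)
  have aeD: "AE \<omega> in M. W \<omega> \<in> D" using ae by (simp add: D_def)
  define r where "r w = measure M {\<omega>\<in>space M. W \<omega> = w}" for w
  define q where "q g = measure M {\<omega>\<in>space M. fst (W \<omega>) = g}" for g
  define N where "N = real (card T)"
  have N: "0 < N" using fT nT by (simp add: N_def card_gt_0_iff)
  have setsP: "\<And>P. {\<omega>\<in>space M. P (W \<omega>)} \<in> sets M" by (rule fiber_sets[OF W])
  have r0: "\<And>w. 0 \<le> r w" by (simp add: r_def)
  have rq: "\<And>g z. r (g, z) \<le> q g"
    unfolding r_def q_def by (rule finite_measure_mono) (auto intro: setsP[of "\<lambda>w. fst w = g" for g, simplified])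
  define \<phi>1 where "\<phi>1 w = - ln (measure M {\<omega>'\<in>space M. F (W \<omega>') = F w})" for w
  define \<phi>2 where "\<phi>2 w = - ln (r w)" for w
  define \<phi>3 where "\<phi>3 (w::'g \<times> 'z) = - ln (q (fst w))" for w
  have H1: "entropy_H M (\<lambda>\<omega>. F (W \<omega>)) = (\<integral>\<omega>. \<phi>1 (W \<omega>) \<partial>M)"
    by (simp add: entropy_H_def \<phi>1_def)
  have H3: "entropy_H M (\<lambda>\<omega>. fst (W \<omega>)) = (\<integral>\<omega>. \<phi>3 (W \<omega>) \<partial>M)"
    by (simp add: entropy_H_def \<phi>3_def q_def)
  note fi = fin_int[OF ps W aeD fD]
  have aepos: "AE \<omega> in M. 0 < r (W \<omega>)"
  proof -
    have "AE \<omega> in M. \<forall>w\<in>D. r w = 0 \<longrightarrow> W \<omega> \<noteq> w"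
    proof (rule AE_finite_allI[OF fD])
      fix w assume "w \<in> D"
      show "AE \<omega> in M. r w = 0 \<longrightarrow> W \<omega> \<noteq> w"
      proof (cases "r w = 0")
        case True
        have s: "{\<omega>\<in>space M. W \<omega> = w} \<in> sets M" using setsP[of "\<lambda>x. x = w"] by simp
        have "{\<omega>\<in>space M. W \<omega> = w} \<in> null_sets M"
          using True s by (auto simp: r_def emeasure_eq_measure)
        then have "AE \<omega> in M. \<omega> \<notin> {\<omega>\<in>space M. W \<omega> = w}" by (rule AE_not_in)
        then show ?thesis using AE_space by eventually_elim auto
      qed simp
    qed
    then show ?thesis using aeD
      by eventually_elim (use r0 in \<open>metis less_eq_real_def\<close>)
  qed
  have step1: "entropy_H M (\<lambda>\<omega>. F (W \<omega>)) \<le> (\<integral>\<omega>. \<phi>2 (W \<omega>) \<partial>M)"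
    unfolding H1
  proof (rule integral_mono_AE[OF fi(1) fi(1)])
    show "AE \<omega> in M. \<phi>1 (W \<omega>) \<le> \<phi>2 (W \<omega>)"
      using aepos AE_space
    proof eventually_elim
      case (elim \<omega>)
      have "r (W \<omega>) \<le> measure M {\<omega>'\<in>space M. F (W \<omega>') = F (W \<omega>)}"
        unfolding r_def by (rule finite_measure_mono) (auto intro: setsP[of "\<lambda>w. F w = F (W \<omega>)", simplified])
      then show ?case using elim by (simp add: \<phi>1_def \<phi>2_def)
    qed
  qed
  have H2: "(\<integral>\<omega>. \<phi>2 (W \<omega>) \<partial>M) = (\<Sum>w\<in>D. - ln (r w) * r w)"
    using fi(2)[of \<phi>2] by (simp add: \<phi>2_def r_def)
  have H3': "entropy_H M (\<lambda>\<omega>. fst (W \<omega>)) = (\<Sum>w\<in>D. - ln (q (fst w)) * r w)"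
    using fi(2)[of \<phi>3] H3 by (simp add: \<phi>3_def r_def)
  have tot: "(\<Sum>w\<in>D. r w) = 1"
    using fi(2)[of "\<lambda>_. 1"] by (simp add: r_def prob_space)
  have qsum: "q g = (\<Sum>z\<in>T. r (g, z))" if "g \<in> DG" for g
  proof -
    have "q g = (\<integral>\<omega>. (if fst (W \<omega>) = g then 1 else 0) \<partial>M)"
    proof -
      have "(\<integral>\<omega>. (if fst (W \<omega>) = g then 1 else 0) \<partial>M) = (\<integral>\<omega>. indicator {\<omega>\<in>space M. fst (W \<omega>) = g} \<omega> \<partial>M)"
        by (rule Bochner_Integration.integral_cong) (auto simp: indicator_def)
      also have "\<dots> = q g" by (simp add: q_def Int_absorb2 sets.sets_into_space)
      finally show ?thesis by simp
    qed
    also have "\<dots> = (\<Sum>w\<in>D. (if fst w = g then 1 else 0) * r w)"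
      using fi(2)[of "\<lambda>w. if fst w = g then 1 else 0"] by (simp add: r_def)
    also have "\<dots> = (\<Sum>g'\<in>DG. \<Sum>z\<in>T. (if g' = g then 1 else 0) * r (g', z))"
      unfolding D_def by (simp add: sum.cartesian_product split_beta)
    also have "\<dots> = (\<Sum>z\<in>T. r (g, z))"
    proof -
      have eq: "(\<lambda>g'. \<Sum>z\<in>T. (if g' = g then 1 else 0) * r (g', z)) = (\<lambda>g'. if g' = g then (\<Sum>z\<in>T. r (g, z)) else 0)"
        by (rule ext) auto
      show ?thesis unfolding eq using that fG by (simp add: sum.delta)
    qed
    finally show ?thesis .
  qed
  have "(\<Sum>w\<in>D. - ln (r w) * r w) \<le> (\<Sum>w\<in>D. - ln (q (fst w)) * r w + q (fst w) / N - r w + r w * ln N)"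
  proof (rule sum_mono)
    fix w assume "w \<in> D"
    obtain g z where w: "w = (g, z)" by (cases w)
    show "- ln (r w) * r w \<le> - ln (q (fst w)) * r w + q (fst w) / N - r w + r w * ln N"
      unfolding w fst_conv by (rule key_ineq[OF r0 rq N])
  qed
  also have "\<dots> = (\<Sum>w\<in>D. - ln (q (fst w)) * r w) + (\<Sum>w\<in>D. q (fst w) / N) - (\<Sum>w\<in>D. r w) + (\<Sum>w\<in>D. r w) * ln N"
    by (simp add: sum.distrib sum_subtractf sum_distrib_right sum_negf)
  also have "(\<Sum>w\<in>D. q (fst w) / N) = 1"
  proof -
    have "(\<Sum>w\<in>D. q (fst w) / N) = (\<Sum>g\<in>DG. \<Sum>z\<in>T. q g / N)"
      unfolding D_def by (simp only: sum.cartesian_product) (simp add: split_beta)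
    also have "\<dots> = (\<Sum>g\<in>DG. q g)" using N by (simp add: N_def)
    also have "\<dots> = (\<Sum>g\<in>DG. \<Sum>z\<in>T. r (g, z))" by (rule sum.cong) (auto simp: qsum)
    also have "\<dots> = (\<Sum>w\<in>D. r w)" unfolding D_def by (simp add: sum.cartesian_product)
    finally show ?thesis using tot by simp
  qed
  finally have "(\<Sum>w\<in>D. - ln (r w) * r w) \<le> entropy_H M (\<lambda>\<omega>. fst (W \<omega>)) + ln N"
    using tot H3' by simp
  then show ?thesis using step1 H2 by (simp add: N_def)
qed



lemma countable_meas:
  fixes f :: "'a \<Rightarrow> 'b::countable"
  assumes "\<And>v. {\<omega>\<in>space M. f \<omega> = v} \<in> sets M"
  shows "f \<in> M \<rightarrow>\<^sub>M count_space UNIV"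
proof -
  have "\<And>v. f -` {v} \<inter> space M = {\<omega>\<in>space M. f \<omega> = v}" by auto
  then show ?thesis using assms by (simp add: measurable_count_space_eq2_countable)
qed

lemma map_meas:
  fixes f :: "nat \<Rightarrow> 'a \<Rightarrow> 'b::countable"
  assumes "\<And>i. i \<in> set xs \<Longrightarrow> f i \<in> M \<rightarrow>\<^sub>M count_space UNIV"
  shows "(\<lambda>\<omega>. map (\<lambda>i. f i \<omega>) xs) \<in> M \<rightarrow>\<^sub>M count_space UNIV"
  using assms
proof (induction xs)
  case Nil then show ?case by simp
next
  case (Cons x xs)
  have r: "(\<lambda>\<omega>. map (\<lambda>i. f i \<omega>) xs) \<in> M \<rightarrow>\<^sub>M count_space UNIV" using Cons by simp
  have fx: "f x \<in> M \<rightarrow>\<^sub>M count_space UNIV" using Cons by simp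
  show ?case
  proof (rule countable_meas)
    fix v :: "'b list"
    show "{\<omega> \<in> space M. map (\<lambda>i. f i \<omega>) (x # xs) = v} \<in> sets M"
    proof (cases v)
      case Nil then show ?thesis by simp
    next
      case (Cons a as)
      have "{\<omega> \<in> space M. map (\<lambda>i. f i \<omega>) (x # xs) = v} =
        {\<omega> \<in> space M. f x \<omega> = a} \<inter> {\<omega> \<in> space M. map (\<lambda>i. f i \<omega>) xs = as}"
        using Cons by auto
      moreover have "{\<omega> \<in> space M. f x \<omega> = a} \<in> sets M"
        using fiber_sets[OF fx, of "\<lambda>y. y = a"] by simp
      moreover have "{\<omega> \<in> space M. map (\<lambda>i. f i \<omega>) xs = as} \<in> sets M"
        using fiber_sets[OF r, of "\<lambda>y. y = as"] by simp
      ultimately show ?thesis by simp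
    qed
  qed
qed

lemma pair_meas:
  fixes f :: "'a \<Rightarrow> 'b::countable" and g :: "'a \<Rightarrow> 'c::countable"
  assumes "f \<in> M \<rightarrow>\<^sub>M count_space UNIV" "g \<in> M \<rightarrow>\<^sub>M count_space UNIV"
  shows "(\<lambda>\<omega>. (f \<omega>, g \<omega>)) \<in> M \<rightarrow>\<^sub>M count_space UNIV"
proof (rule countable_meas)
  fix v :: "'b \<times> 'c"
  have "{\<omega> \<in> space M. (f \<omega>, g \<omega>) = v} = {\<omega> \<in> space M. f \<omega> = fst v} \<inter> {\<omega> \<in> space M. g \<omega> = snd v}"
    by (cases v) auto
  moreover have "{\<omega> \<in> space M. f \<omega> = fst v} \<in> sets M"
    using fiber_sets[OF assms(1), of "\<lambda>y. y = fst v"] by simp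
  moreover have "{\<omega> \<in> space M. g \<omega> = snd v} \<in> sets M"
    using fiber_sets[OF assms(2), of "\<lambda>y. y = snd v"] by simp
  ultimately show "{\<omega> \<in> space M. (f \<omega>, g \<omega>) = v} \<in> sets M" by simp
qed

lemma AE_support:
  assumes "prob_space M" "f \<in> M \<rightarrow>\<^sub>M count_space UNIV"
    "distr M (count_space UNIV) f = measure_pmf p"
  shows "AE \<omega> in M. f \<omega> \<in> set_pmf p"
proof -
  have "AE x in distr M (count_space UNIV) f. x \<in> set_pmf p"
    by (subst assms(3)) (rule AE_measure_pmf)
  then show ?thesis using AE_distr_iff[OF assms(2), of "\<lambda>x. x \<in> set_pmf p"] by simp
qed

lemma finite_validg: "finite {gs. validg k gs l}"
proof -
  define B where "B = (\<Union>i<l. {xs. set xs \<subseteq> {1..k i} \<times> {1..k i} \<and> length xs = k (Suc i)})"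
  have fB: "finite B" unfolding B_def by (intro finite_UN_I finite_lists_length_eq) auto
  have "{gs. validg k gs l} \<subseteq> {gs. set gs \<subseteq> B \<and> length gs = l}"
  proof (rule subsetI, rule CollectI, rule conjI)
    fix gs assume v: "gs \<in> {gs. validg k gs l}"
    then show "length gs = l" by (simp add: validg_def)
    show "set gs \<subseteq> B"
    proof
    fix x assume x: "x \<in> set gs"
    then obtain i where i: "i < length gs" "x = gs ! i" by (auto simp: in_set_conv_nth)
    then have "i < l" "length x = k (Suc i)" "set x \<subseteq> {1..k i} \<times> {1..k i}"
      using v by (auto simp: validg_def)
    then show "x \<in> B" unfolding B_def by blast
    qed
  qed
  then show ?thesis using finite_lists_length_eq[OF fB] finite_subset by blast
qed

lemma bound_l:
  fixes M :: "'a measure" and k :: "nat \<Rightarrow> nat"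
    and S :: "nat \<Rightarrow> 'a \<Rightarrow> (nat \<times> nat) set" and C :: "nat \<Rightarrow> 'a \<Rightarrow> nat"
    and n j l :: nat
  assumes ps: "prob_space M"
    and k1: "\<forall>n. 1 \<le> k n"
    and kk: "\<forall>n\<ge>1. k (n - 1) \<le> k n \<and> k n \<le> k (n - 1) ^ 2"
    and dS: "\<forall>n\<ge>1. distr M (count_space UNIV) (S n) =
           measure_pmf (pmf_of_set {A. A \<subseteq> {1..k (n - 1)} \<times> {1..k (n - 1)} \<and> card A = k n})"
    and dC: "\<forall>n. distr M (count_space UNIV) (C n) = measure_pmf (pmf_of_set {1..k n})"
    and ind: "prob_space.indep_vars M (\<lambda>_. count_space UNIV)
           (\<lambda>i \<omega>. case i of Inl m \<Rightarrow> Inl (S m \<omega>) | Inr m \<Rightarrow> Inr (C m \<omega>))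
           ({Inl m | m. 1 \<le> m} \<union> range Inr)"
    and j1: "1 \<le> j" and ln: "l \<le> n"
  shows "entropy_H M (\<lambda>\<omega>. rha_block (\<lambda>m. S m \<omega>) (\<lambda>m. C m \<omega>) n j)
         \<le> entropy_H M (\<lambda>\<omega>. rha_G (\<lambda>m. S m \<omega>) l) + 2 ^ (n - l) * ln (real (k l))"
proof -
  interpret prob_space M by (rule ps)
  obtain e where e: "2 ^ e \<le> j" "j < 2 ^ Suc e" using ex_power_ivl1[of 2 j] j1 by auto
  define m where "m = n + e"
  define t where "t = j - 2 ^ e"
  have rv: "\<And>i. i \<in> {Inl m | m. 1 \<le> m} \<union> range Inr \<Longrightarrow>
     (\<lambda>\<omega>. case i of Inl m \<Rightarrow> Inl (S m \<omega>) | Inr m \<Rightarrow> Inr (C m \<omega>)) \<in> M \<rightarrow>\<^sub>M count_space UNIV"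
    using ind unfolding indep_vars_def by blast
  have Smeas: "S i \<in> M \<rightarrow>\<^sub>M count_space UNIV" if "1 \<le> i" for i
  proof -
    have "(\<lambda>\<omega>. Inl (S i \<omega>) :: (nat \<times> nat) set + nat) \<in> M \<rightarrow>\<^sub>M count_space UNIV"
      using rv[of "Inl i"] that by auto
    then have "(\<lambda>\<omega>. projl (Inl (S i \<omega>) :: (nat \<times> nat) set + nat)) \<in> M \<rightarrow>\<^sub>M count_space UNIV"
      by (rule measurable_compose) simp
    then show ?thesis by simp
  qed
  have Cmeas: "C i \<in> M \<rightarrow>\<^sub>M count_space UNIV" for i
  proof -
    have "(\<lambda>\<omega>. Inr (C i \<omega>) :: (nat \<times> nat) set + nat) \<in> M \<rightarrow>\<^sub>M count_space UNIV"
      using rv[of "Inr i"] by auto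
    then have "(\<lambda>\<omega>. projr (Inr (C i \<omega>) :: (nat \<times> nat) set + nat)) \<in> M \<rightarrow>\<^sub>M count_space UNIV"
      by (rule measurable_compose) simp
    then show ?thesis by simp
  qed
  define U where "U \<omega> = (rha_G (\<lambda>i. S i \<omega>) m, C m \<omega>)" for \<omega>
  have Umeas: "U \<in> M \<rightarrow>\<^sub>M count_space UNIV"
    unfolding U_def rha_G_def
  proof (rule pair_meas[OF map_meas Cmeas])
    fix i assume "i \<in> set [1..<m + 1]"
    then have "1 \<le> i" by auto
    then show "(\<lambda>\<omega>. lex_sorted_list (S i \<omega>)) \<in> M \<rightarrow>\<^sub>M count_space UNIV"
      by (rule measurable_compose[OF Smeas]) simp
  qed
  define FW where "FW u = (take l (fst u), take (2 ^ (n - l)) (drop (t * 2 ^ (n - l)) (Dg (fst u) l m (snd u))))"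
    for u :: "(nat \<times> nat) list list \<times> nat"
  define W where "W \<omega> = FW (U \<omega>)" for \<omega>
  define F where "F w = concat (map (Yg (fst w) l) (snd w))" for w :: "(nat \<times> nat) list list \<times> nat list"
  have Wmeas: "W \<in> M \<rightarrow>\<^sub>M count_space UNIV"
    unfolding W_def by (rule measurable_compose[OF Umeas]) simp
  have blk: "rha_block (\<lambda>m. S m \<omega>) (\<lambda>m. C m \<omega>) n j = F (W \<omega>)" for \<omega>
    unfolding F_def W_def FW_def U_def using block_repr[OF e ln, of "\<lambda>m. S m \<omega>" "\<lambda>m. C m \<omega>"]
    by (simp add: m_def t_def)
  have gl: "rha_G (\<lambda>m. S m \<omega>) l = fst (W \<omega>)" for \<omega>
  proof -
    have "l \<le> m" using ln by (simp add: m_def)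
    then have "take l [1..<m+1] = [1..<l+1]" by (simp add: take_upt del: upt_Suc)
    then show ?thesis unfolding W_def FW_def U_def rha_G_def by (simp add: take_map del: upt_Suc)
  qed
  define DG where "DG = {gs. validg k gs l}"
  define T where "T = {zs. set zs \<subseteq> {1..k l} \<and> length zs = 2 ^ (n - l)}"
  have fDG: "finite DG" unfolding DG_def by (rule finite_validg)
  have fT: "finite T" unfolding T_def by (rule finite_lists_length_eq) simp
  have cT: "card T = k l ^ (2 ^ (n - l))" unfolding T_def by (subst card_lists_length_eq) simp_all
  have nT: "T \<noteq> {}"
  proof -
    have "replicate (2 ^ (n - l)) 1 \<in> T" using k1 by (auto simp: T_def)
    then show ?thesis by blast
  qed
  define A where "A i = {B. B \<subseteq> {1..k (i - 1)} \<times> {1..k (i - 1)} \<and> card B = k i}" for i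
  have aeS: "AE \<omega> in M. S i \<omega> \<in> A i" if "1 \<le> i" for i
  proof -
    have fA: "finite (A i)" unfolding A_def
      by (rule finite_subset[of _ "Pow ({1..k (i - 1)} \<times> {1..k (i - 1)})"]) auto
    have "k i \<le> card ({1..k (i - 1)} \<times> {1..k (i - 1)})"
      using kk that by (simp add: card_cartesian_product power2_eq_square)
    then obtain B where "B \<subseteq> {1..k (i - 1)} \<times> {1..k (i - 1)}" "card B = k i"
      using obtain_subset_with_card_n by metis
    then have nA: "A i \<noteq> {}" unfolding A_def by blast
    have "AE \<omega> in M. S i \<omega> \<in> set_pmf (pmf_of_set (A i))"
      by (rule AE_support[OF ps Smeas[OF that]]) (use dS that in \<open>simp add: A_def\<close>)
    then show ?thesis using fA nA by simp
  qed
  have aeC: "AE \<omega> in M. C m \<omega> \<in> {1..k m}"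
  proof -
    have "AE \<omega> in M. C m \<omega> \<in> set_pmf (pmf_of_set {1..k m})"
      by (rule AE_support[OF ps Cmeas]) (use dC in simp)
    then show ?thesis using k1 by (simp add: Suc_le_eq)
  qed
  have aeW: "AE \<omega> in M. W \<omega> \<in> DG \<times> T"
  proof -
    have "AE \<omega> in M. \<forall>i\<in>{1..m}. S i \<omega> \<in> A i"
      by (rule AE_finite_allI) (auto intro: aeS)
    then show ?thesis using aeC
    proof eventually_elim
      case (elim \<omega>)
      define gs where "gs = rha_G (\<lambda>i. S i \<omega>) m"
      have v: "\<forall>i<m. length (gs ! i) = k (Suc i) \<and> set (gs ! i) \<subseteq> {1..k i} \<times> {1..k i}"
      proof (intro allI impI)
        fix i assume "i < m"
        then have "S (Suc i) \<omega> \<in> A (Suc i)" using elim by auto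
        then have s: "S (Suc i) \<omega> \<subseteq> {1..k i} \<times> {1..k i}" "card (S (Suc i) \<omega>) = k (Suc i)"
          by (auto simp: A_def)
        then have f: "finite (S (Suc i) \<omega>)" using finite_subset by blast
        show "length (gs ! i) = k (Suc i) \<and> set (gs ! i) \<subseteq> {1..k i} \<times> {1..k i}"
          using lex_sorted_list_props[OF f] s \<open>i < m\<close> by (simp add: gs_def rha_G_nth)
      qed
      have lg: "length gs = m" by (simp add: gs_def rha_G_def)
      have lm: "l \<le> m" using ln by (simp add: m_def)
      have "take l gs \<in> DG" using v lg lm by (auto simp: DG_def validg_def)
      moreover have "take (2 ^ (n - l)) (drop (t * 2 ^ (n - l)) (Dg gs l m (C m \<omega>))) \<in> T"
      proof -
        have s: "set (Dg gs l m (C m \<omega>)) \<subseteq> {1..k l}" by (rule set_Dg[OF v elim(2) lm])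
        have len: "length (Dg gs l m (C m \<omega>)) = 2 ^ (m - l)" by (rule length_Dg[OF lm])
        have "t + 1 \<le> 2 ^ e" using e by (simp add: t_def)
        then have "(t + 1) * 2 ^ (n - l) \<le> 2 ^ e * 2 ^ (n - l)" by (rule mult_le_mono1)
        then have "t * 2 ^ (n - l) + 2 ^ (n - l) \<le> 2 ^ e * 2 ^ (n - l)" by (simp add: algebra_simps)
        also have "\<dots> = 2 ^ (m - l)" using ln by (simp add: m_def power_add[symmetric])
        finally have "t * 2 ^ (n - l) + 2 ^ (n - l) \<le> 2 ^ (m - l)" .
        then show ?thesis using s len unfolding T_def
          by (auto dest: in_set_takeD in_set_dropD)
      qed
      ultimately show ?case unfolding W_def FW_def U_def gs_def by simp
    qed
  qed
  have main: "entropy_H M (\<lambda>\<omega>. F (W \<omega>)) \<le> entropy_H M (\<lambda>\<omega>. fst (W \<omega>)) + ln (card T)"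
    by (rule entropy_bound[OF ps Wmeas aeW fDG fT nT])
  have lnT: "ln (real (card T)) = 2 ^ (n - l) * ln (real (k l))"
    using k1 by (simp add: cT ln_realpow)
  show ?thesis using main unfolding lnT blk gl by simp
qed

theorem proposition8:
  fixes M :: "'a measure" and k :: "nat \<Rightarrow> nat"
    and S :: "nat \<Rightarrow> 'a \<Rightarrow> (nat \<times> nat) set" and C :: "nat \<Rightarrow> 'a \<Rightarrow> nat"
    and n j :: nat
  assumes "prob_space M"
    and "\<forall>n. 1 \<le> k n"
    and "\<forall>n\<ge>1. k (n - 1) \<le> k n \<and> k n \<le> k (n - 1) ^ 2"
    and "\<forall>n\<ge>1. distr M (count_space UNIV) (S n) =
           measure_pmf (pmf_of_set {A. A \<subseteq> {1..k (n - 1)} \<times> {1..k (n - 1)} \<and> card A = k n})"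
    and "\<forall>n. distr M (count_space UNIV) (C n) = measure_pmf (pmf_of_set {1..k n})"
    and "prob_space.indep_vars M (\<lambda>_. count_space UNIV)
           (\<lambda>i \<omega>. case i of Inl m \<Rightarrow> Inl (S m \<omega>) | Inr m \<Rightarrow> Inr (C m \<omega>))
           ({Inl m | m. 1 \<le> m} \<union> range Inr)"
    and "1 \<le> j"
  shows "entropy_H M (\<lambda>\<omega>. rha_block (\<lambda>m. S m \<omega>) (\<lambda>m. C m \<omega>) n j)
         \<le> Min ((\<lambda>l. entropy_H M (\<lambda>\<omega>. rha_G (\<lambda>m. S m \<omega>) l) + 2 ^ (n - l) * ln (real (k l))) ` {0..n})"
  by (rule Min.boundedI) (auto intro: bound_l[OF assms])

end
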